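(* Let $\{q_k:k\ge0\}$ be a non-decreasing sequence of nonnegative numbers with $q_0>0$ satisfying $\frac{q_{n-1}}{Q_n}=O(1/n)$ as $n\to\infty$. There is a constant $c>0$ such that for all $N\in\mathbb N$ and all $n\ge M_N$: (i) if $x\in I_N^{k,l}$ with $0\le k\le N-2$ and $k+1\le l\le N-1$, then $$\int_{I_N}|F_n(x-t)|\,d\mu(t)\le\frac{cM_lM_k}{nM_N};$$ (ii) if $x\in I_N^{k,N}$ with $0\le k\le N-1$, then $$\int_{I_N}|F_n(x-t)|\,d\mu(t)\le\frac{cM_k}{M_N}.$$
   Context: Let $m=(m_0,m_1,\dots)$ be a bounded sequence of integers $m_k\ge 2$; $G_m=\prod_k Z_{m_k}$ (a compact abelian group under coordinatewise addition mod $m_k$) with Haar probability measure $\mu$; $M_0=1$, $M_{k+1}=m_kM_k$, $n=\sum_j n_jM_j$ with $n_j\in Z_{m_j}$. $I_N=\{x: x_0=\dots=x_{N-1}=0\}$. For $0\le k<l<N$, $I_N^{k,l}$ is the set of $x\in G_m$ with $x_0=\dots=x_{k-1}=0$, $x_k\ne0$, $x_{k+1}=\dots=x_{l-1}=0$, $x_l\ne0$ (other coordinates arbitrary); for $0\le k<N$, $I_N^{k,N}$ is the set of $x$ with $x_0=\dots=x_{k-1}=0$, $x_k\ne 0$, $x_{k+1}=\dots=x_{N-1}=0$. $r_k(x)=\exp(2\pi i x_k/m_k)$, $\psi_n=\prod_k r_k^{n_k}$, $D_n=\sum_{k=0}^{n-1}\psi_k$. $Q_n=\sum_{k=0}^{n-1}q_k$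 and $F_n=\frac1{Q_n}\sum_{k=1}^nq_{n-k}D_k$. *)

theory Defs
  imports "HOL-Probability.Probability" "HOL-Library.Landau_Symbols"
begin

text \<open>Vilenkin group G_m: points are sequences x with x k < m k.
  Haar measure = infinite product of uniform measures on Z_{m_k}.\<close>

definition Vspace :: "(nat \<Rightarrow> nat) \<Rightarrow> (nat \<Rightarrow> nat) set" where
  "Vspace m = PiE UNIV (\<lambda>k. {..<m k})"

definition Vmu :: "(nat \<Rightarrow> nat) \<Rightarrow> (nat \<Rightarrow> nat) measure" where
  "Vmu m = PiM UNIV (\<lambda>k. uniform_count_measure {..<m k})"

definition Vsub :: "(nat \<Rightarrow> nat) \<Rightarrow> (nat \<Rightarrow> nat) \<Rightarrow> (nat \<Rightarrow> nat) \<Rightarrow> (nat \<Rightarrow> nat)" where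
  "Vsub m x t = (\<lambda>k. nat ((int (x k) - int (t k)) mod int (m k)))"

definition VM :: "(nat \<Rightarrow> nat) \<Rightarrow> nat \<Rightarrow> nat" where
  "VM m k = (\<Prod>j<k. m j)"

definition digit :: "(nat \<Rightarrow> nat) \<Rightarrow> nat \<Rightarrow> nat \<Rightarrow> nat" where
  "digit m n k = (n div VM m k) mod m k"

definition rk :: "(nat \<Rightarrow> nat) \<Rightarrow> nat \<Rightarrow> (nat \<Rightarrow> nat) \<Rightarrow> complex" where
  "rk m k x = exp (2 * pi * \<i> * of_nat (x k) / of_nat (m k))"

text \<open>psi_n = prod_k r_k^{n_k}; only finitely many digits are nonzero\<close>
definition psi :: "(nat \<Rightarrow> nat) \<Rightarrow> nat \<Rightarrow> (nat \<Rightarrow> nat) \<Rightarrow> complex" where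
  "psi m n x = (\<Prod>k\<in>{k. digit m n k \<noteq> 0}. rk m k x ^ digit m n k)"

definition Dir :: "(nat \<Rightarrow> nat) \<Rightarrow> nat \<Rightarrow> (nat \<Rightarrow> nat) \<Rightarrow> complex" where
  "Dir m n x = (\<Sum>k<n. psi m k x)"

definition Qs :: "(nat \<Rightarrow> real) \<Rightarrow> nat \<Rightarrow> real" where
  "Qs q n = (\<Sum>k<n. q k)"

definition Fn :: "(nat \<Rightarrow> nat) \<Rightarrow> (nat \<Rightarrow> real) \<Rightarrow> nat \<Rightarrow> (nat \<Rightarrow> nat) \<Rightarrow> complex" where
  "Fn m q n x = (1 / of_real (Qs q n)) * (\<Sum>k=1..n. of_real (q (n - k)) * Dir m k x)"

definition IN :: "(nat \<Rightarrow> nat) \<Rightarrow> nat \<Rightarrow> (nat \<Rightarrow> nat) set" where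
  "IN m N = {x \<in> Vspace m. \<forall>j<N. x j = 0}"

definition INkl :: "(nat \<Rightarrow> nat) \<Rightarrow> nat \<Rightarrow> nat \<Rightarrow> nat \<Rightarrow> (nat \<Rightarrow> nat) set" where
  "INkl m N k l = {x \<in> Vspace m. (\<forall>j<k. x j = 0) \<and> x k \<noteq> 0 \<and>
      (\<forall>j. k < j \<and> j < l \<longrightarrow> x j = 0) \<and> x l \<noteq> 0}"

definition INkN :: "(nat \<Rightarrow> nat) \<Rightarrow> nat \<Rightarrow> nat \<Rightarrow> (nat \<Rightarrow> nat) set" where
  "INkN m N k = {x \<in> Vspace m. (\<forall>j<k. x j = 0) \<and> x k \<noteq> 0 \<and>
      (\<forall>j. k < j \<and> j < N \<longrightarrow> x j = 0)}"

end

theory Submission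
  imports Defs
begin


lemma Vmu_IN:
  assumes m1: "\<And>k. m k \<ge> 1"
  shows "IN m N \<in> sets (Vmu m)" "measure (Vmu m) (IN m N) = 1 / real (VM m N)"
proof -
  interpret product_prob_space "\<lambda>k. uniform_count_measure {..<m k}" UNIV
    unfolding product_prob_space_def product_sigma_finite_def product_prob_space_axioms_def
    using m1 by (auto intro!: prob_space_uniform_count_measure prob_space_imp_sigma_finite
        simp: Suc_le_eq)
  have sp: "space (Vmu m) = Vspace m"
    by (simp add: Vmu_def Vspace_def space_PiM space_uniform_count_measure)
  have eq: "IN m N = {x\<in>space (Vmu m). \<forall>i\<in>{..<N}. x i \<in> {0}}"
    by (auto simp: IN_def sp)
  show "IN m N \<in> sets (Vmu m)"
  proof -
    have "{x\<in>space (Vmu m). \<forall>i\<in>{..<N}. x i \<in> {0}} = prod_emb UNIV (\<lambda>k. uniform_count_measure {..<m k}) {..<N} (\<Pi>\<^sub>E j\<in>{..<N}. {0})"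
      unfolding prod_emb_def Vmu_def
      by (auto simp: space_PiM fun_eq_iff restrict_def split: if_splits)
    also have "\<dots> \<in> sets (Vmu m)" unfolding Vmu_def
      by (rule sets_PiM_I) (use m1 in \<open>auto simp: sets_uniform_count_measure Suc_le_eq\<close>)
    finally show ?thesis unfolding eq .
  qed
  have "emeasure (Vmu m) (IN m N) = (\<Prod>i\<in>{..<N}. emeasure (uniform_count_measure {..<m i}) {0})"
    unfolding eq Vmu_def by (rule emeasure_PiM_Collect) (use m1 in \<open>auto simp: sets_uniform_count_measure Suc_le_eq\<close>)
  also have "\<dots> = (\<Prod>i\<in>{..<N}. ennreal (1 / real (m i)))"
    using m1 by (intro prod.cong refl) (auto simp: emeasure_uniform_count_measure Suc_le_eq ennreal_of_nat_eq_real_of_nat divide_ennreal)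
  also have "\<dots> = ennreal (1 / real (VM m N))"
    by (simp add: prod_ennreal VM_def prod_dividef)
  finally show "measure (Vmu m) (IN m N) = 1 / real (VM m N)"
    by (simp add: measure_def)
qed

lemma set_integral_le_bound:
  fixes f :: "'a \<Rightarrow> real"
  assumes "A \<in> sets M" "finite_measure M" "\<And>t. t \<in> A \<Longrightarrow> f t \<le> K" "\<And>t. f t \<ge> 0" "K \<ge> 0"
  shows "(LINT t:A|M. f t) \<le> K * measure M A"
proof (cases "set_integrable M A f")
  case True
  interpret finite_measure M by fact
  have "(LINT t:A|M. f t) \<le> (LINT t:A|M. K)"
    by (rule set_integral_mono[OF True]) (use assms in \<open>auto simp: set_integrable_def emeasure_finite less_top[symmetric]\<close>)
  also have "\<dots> = K * measure M A" using assms(1,2)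
    by (simp add: set_integral_const finite_measure.emeasure_finite)
  finally show ?thesis .
next
  case False
  then have "(LINT t:A|M. f t) = 0"
    by (simp add: set_lebesgue_integral_def set_integrable_def not_integrable_integral_eq)
  then show ?thesis using assms by (simp add: measure_nonneg)
qed


lemma VM_Suc: "VM m (Suc j) = VM m j * m j"
  by (simp add: VM_def)

lemma VM_pos: "(\<And>k. m k \<ge> 2) \<Longrightarrow> VM m j > 0"
  unfolding VM_def by (rule prod_pos) (metis not_numeral_le_zero not_gr0)

lemma VM_dvd: "i \<le> j \<Longrightarrow> VM m i dvd VM m j"
  unfolding VM_def by (rule prod_dvd_prod_subset) auto

lemma VM_gt: "(\<And>k. m k \<ge> 2) \<Longrightarrow> j < VM m j"
proof (induction j)
  case 0 then show ?case by (simp add: VM_def)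
next
  case (Suc j)
  have "VM m j * 2 \<le> VM m j * m j" using Suc.prems by simp
  then show ?case using Suc.IH[OF Suc.prems] unfolding VM_Suc by linarith
qed

lemma digit_add_low:
  assumes m2: "\<And>k. m k \<ge> 2" and "VM m s dvd X" "j < s"
  shows "digit m (X + a) j = digit m a j"
proof -
  have "VM m (Suc j) dvd X" using assms VM_dvd[of "Suc j" s m] dvd_trans by auto
  then obtain t where "X = VM m (Suc j) * t" by (auto elim!: dvdE)
  then have X: "X = VM m j * (m j * t)" by (simp add: VM_Suc mult.assoc)
  have p: "VM m j > 0" using VM_pos[OF m2] .
  have "(X + a) div VM m j = m j * t + a div VM m j"
    unfolding X using p by (simp add: add.commute)
  then show ?thesis unfolding digit_def by simp
qed

lemma digit_add_high:
  assumes m2: "\<And>k. m k \<ge> 2" and "VM m s dvd X" "a < VM m s" "s \<le> j"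
  shows "digit m (X + a) j = digit m X j"
proof -
  obtain R where R: "VM m j = VM m s * R" using VM_dvd[OF assms(4), of m] by (auto elim!: dvdE)
  obtain t where X: "X = VM m s * t" using assms(2) by (auto elim!: dvdE)
  have p: "VM m s > 0" using VM_pos[OF m2] .
  have "(X + a) div VM m s = t" unfolding X using p assms(3) by simp
  moreover have "X div VM m s = t" unfolding X using p by simp
  ultimately have "(X + a) div VM m j = X div VM m j"
    unfolding R by (simp add: div_mult2_eq)
  then show ?thesis by (simp add: digit_def)
qed

lemma digit_block:
  assumes m2: "\<And>k. m k \<ge> 2" and "d < m j" "t < VM m j"
  shows "digit m (c * VM m (Suc j) + d * VM m j + t) j = d"
proof -
  have p: "VM m j > 0" using VM_pos[OF m2] .
  have "c * VM m (Suc j) + d * VM m j + t = (c * m j + d) * VM m j + t"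
    by (simp add: VM_Suc algebra_simps)
  then have "(c * VM m (Suc j) + d * VM m j + t) div VM m j = c * m j + d"
    using p assms(3) by simp
  then show ?thesis using assms(2) by (simp add: digit_def)
qed

lemma digit_zero_big: "n < VM m j \<Longrightarrow> digit m n j = 0"
  unfolding digit_def by (subst div_less) auto

lemma digitset_sub: assumes m2: "\<And>k. m k \<ge> 2" shows "{j. digit m i j \<noteq> 0} \<subseteq> {..<i}"
proof
  fix j assume "j \<in> {j. digit m i j \<noteq> 0}"
  then have nz: "digit m i j \<noteq> 0" by simp
  have "\<not> i < VM m j"
  proof
    assume "i < VM m j"
    then have "digit m i j = 0" by (rule digit_zero_big)
    with nz show False by simp
  qed
  moreover have "j < VM m j" by (rule VM_gt[OF m2])
  ultimately show "j \<in> {..<i}" by simp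
qed

lemma digitset_fin: assumes m2: "\<And>k. m k \<ge> 2" shows "finite {j. digit m i j \<noteq> 0}"
  by (rule finite_subset[OF digitset_sub[OF m2]]) simp

definition hp :: "(nat \<Rightarrow> nat) \<Rightarrow> (nat \<Rightarrow> nat) \<Rightarrow> nat \<Rightarrow> nat \<Rightarrow> complex" where
  "hp m y s i = (\<Prod>j\<in>{j. digit m i j \<noteq> 0 \<and> s \<le> j}. rk m j y ^ digit m i j)"

lemma hp_cong: "(\<And>j. s \<le> j \<Longrightarrow> digit m i j = digit m i' j) \<Longrightarrow> hp m y s i = hp m y s i'"
  unfolding hp_def
  by (rule prod.cong) auto

lemma psi_split:
  assumes m2: "\<And>k. m k \<ge> 2"
  shows "psi m i y = (\<Prod>j<s. rk m j y ^ digit m i j) * hp m y s i"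
proof -
  let ?S = "{j. digit m i j \<noteq> 0}"
  let ?f = "\<lambda>j. rk m j y ^ digit m i j"
  have fin: "finite ?S" by (rule digitset_fin[OF m2])
  have eq: "?S = (?S \<inter> {..<s}) \<union> {j. digit m i j \<noteq> 0 \<and> s \<le> j}" by auto
  have "psi m i y = prod ?f (?S \<inter> {..<s}) * hp m y s i"
    unfolding psi_def hp_def
    by (subst eq, rule prod.union_disjoint) (use fin in auto)
  moreover have "prod ?f (?S \<inter> {..<s}) = prod ?f {..<s}"
    by (rule prod.mono_neutral_left) (auto, metis gr0I power_0)
  ultimately show ?thesis by simp
qed

lemma rk_zero: "y j = 0 \<Longrightarrow> rk m j y = 1"
  by (simp add: rk_def)

lemma norm_rk: "norm (rk m j y) = 1"
  unfolding rk_def by (simp add: norm_exp_eq_Re)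

lemma norm_psi: "norm (psi m i y) = 1"
  unfolding psi_def by (simp add: prod_norm[symmetric] norm_power norm_rk)

lemma rk_pow: "m j > 0 \<Longrightarrow> rk m j y ^ m j = 1"
proof -
  assume p: "m j > 0"
  have "rk m j y ^ m j = exp (of_nat (m j) * (2 * pi * \<i> * of_nat (y j) / of_nat (m j)))"
    unfolding rk_def by (rule exp_of_nat_mult[symmetric])
  also have "\<dots> = exp ((2 * of_nat (y j) * pi) * \<i>)" using p by (simp add: field_simps)
  also have "\<dots> = 1" by (rule exp_integer_2pi) simp
  finally show ?thesis .
qed

lemma rk_ne1:
  assumes "0 < y j" "y j < m j"
  shows "rk m j y \<noteq> 1"
proof
  assume "rk m j y = 1"
  then obtain n :: int where n: "Im (2 * pi * \<i> * of_nat (y j) / of_nat (m j)) = of_int (2 * n) * pi"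
    unfolding rk_def exp_eq_1 by blast
  have "Im (2 * pi * \<i> * of_nat (y j) / of_nat (m j)) = 2 * pi * (real (y j) / real (m j))"
    by simp
  with n have e: "(2 * pi) * (real (y j) / real (m j)) = (2 * pi) * of_int n" by simp
  have r: "real (y j) / real (m j) = of_int n"
    by (rule mult_left_cancel[THEN iffD1, OF _ e]) simp
  have "0 < real (y j) / real (m j)" using assms by simp
  moreover have "real (y j) / real (m j) < 1" using assms by simp
  ultimately have "0 < n" "n < 1" using r by linarith+
  then show False by simp
qed

lemma root_sum: fixes w :: complex assumes "w ^ n = 1" "w \<noteq> 1" shows "(\<Sum>u<n. w ^ u) = 0"
  using assms by (simp add: sum_gp_strict)

lemma sum_lt_add: "(\<Sum>i<(n::nat)+a. g i) = (\<Sum>i<n. g i) + (\<Sum>t<a. g (n+t))"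
  by (induction a) (simp_all add: add.assoc)

lemma sum_blocks: "(\<Sum>r<(b::nat)*a. g r) = (\<Sum>d<b. \<Sum>t<a. g (d*a + t))"
proof (induction b)
  case 0 then show ?case by simp
next
  case (Suc b)
  have "(\<Sum>r<Suc b*a. g r) = (\<Sum>r<b*a + a. g r)" by (simp add: add.commute)
  also have "\<dots> = (\<Sum>r<b*a. g r) + (\<Sum>t<a. g (b*a+t))" by (rule sum_lt_add)
  finally show ?case using Suc by simp
qed

lemma block_zero:
  fixes f :: "nat \<Rightarrow> 'a::comm_monoid_add" and L c :: nat
  assumes H: "\<And>c. (\<Sum>t<L. f (c*L+t)) = 0" shows "(\<Sum>i<c*L. f i) = 0"
proof -
  have "(\<Sum>i<c*L. f i) = (\<Sum>d<c. \<Sum>t<L. f (d*L+t))" using sum_blocks[of f c L] by simp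
  also have "\<dots> = 0" by (simp add: H)
  finally show ?thesis .
qed

lemma block_bound:
  fixes f :: "nat \<Rightarrow> 'a::real_normed_vector"
  assumes "L > 0" "\<And>c. (\<Sum>t<L. f (c*L+t)) = 0" "\<And>i. norm (f i) \<le> K"
  shows "norm (\<Sum>i<n. f i) \<le> real L * K"
proof -
  have K0: "0 \<le> K" using assms(3)[of 0] norm_ge_zero order_trans by blast
  have "n = (n div L)*L + n mod L" by simp
  then have "(\<Sum>i<n. f i) = (\<Sum>i<(n div L)*L. f i) + (\<Sum>t<n mod L. f ((n div L)*L + t))"
    by (metis sum_lt_add)
  also have "(\<Sum>i<(n div L)*L. f i) = 0" by (rule block_zero) (rule assms(2))
  finally have "norm (\<Sum>i<n. f i) = norm (\<Sum>t<n mod L. f ((n div L)*L + t))" by simp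
  also have "\<dots> \<le> (\<Sum>t<n mod L. norm (f ((n div L)*L + t)))" by (rule norm_sum)
  also have "\<dots> \<le> (\<Sum>t<n mod L. K)" by (rule sum_mono) (rule assms(3))
  also have "\<dots> = real (n mod L) * K" by simp
  also have "\<dots> \<le> real L * K"
    by (rule mult_right_mono) (use assms(1) K0 in auto)
  finally show ?thesis .
qed

lemma psi_k:
  assumes m2: "\<And>k. m k \<ge> 2" and z: "\<And>j. j < k \<Longrightarrow> y j = 0"
  shows "psi m i y = rk m k y ^ digit m i k * hp m y (Suc k) i"
proof -
  have "(\<Prod>j<k. rk m j y ^ digit m i j) = 1"
    by (rule prod.neutral) (simp add: z rk_zero)
  then show ?thesis using psi_split[OF m2, where i=i and y=y and s="Suc k"] by simp
qed

lemma psi_kl: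
  assumes m2: "\<And>k. m k \<ge> 2" and kl: "k < l" and z: "\<And>j. j < k \<Longrightarrow> y j = 0"
    and z2: "\<And>j. k < j \<Longrightarrow> j < l \<Longrightarrow> y j = 0"
  shows "psi m i y = rk m k y ^ digit m i k * rk m l y ^ digit m i l * hp m y (Suc l) i"
proof -
  let ?f = "\<lambda>j. rk m j y ^ digit m i j"
  have "(\<Prod>j<l. ?f j) = ?f k * (\<Prod>j\<in>{..<l}-{k}. ?f j)"
    by (rule prod.remove) (use kl in auto)
  also have "(\<Prod>j\<in>{..<l}-{k}. ?f j) = 1"
  proof (rule prod.neutral, rule ballI)
    fix j assume j: "j \<in> {..<l}-{k}"
    have "y j = 0"
    proof (cases "j < k")
      case True then show ?thesis by (rule z)
    next
      case False then have "k < j" using j by auto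
      then show ?thesis using z2 j by auto
    qed
    then show "?f j = 1" by (simp add: rk_zero)
  qed
  finally have "(\<Prod>j<l. ?f j) = ?f k" by simp
  then show ?thesis using psi_split[OF m2, where i=i and y=y and s="Suc l"] by simp
qed

lemma lt_block: "d < (mm::nat) \<Longrightarrow> t < M \<Longrightarrow> d*M + t < mm*M"
proof -
  assume a: "d < mm" "t < M"
  have "Suc d * M \<le> mm * M" by (rule mult_right_mono) (use a in auto)
  then show ?thesis using a by simp
qed

lemma psi_block:
  assumes m2: "\<And>k. m k \<ge> 2" and z: "\<And>j. j < k \<Longrightarrow> y j = 0" and yk: "0 < y k" "y k < m k"
  shows "(\<Sum>t<VM m (Suc k). psi m (c*VM m (Suc k) + t) y) = 0"
proof -
  let ?w = "rk m k y"
  let ?M = "VM m (Suc k)"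
  let ?h = "hp m y (Suc k) (c*?M)"
  have tm: "psi m (c*?M + (d*VM m k + t)) y = ?w ^ d * ?h" if dt: "d < m k" "t < VM m k" for d t
  proof -
    have lt: "d*VM m k + t < ?M" using lt_block[OF dt] by (simp add: VM_Suc mult.commute)
    have "digit m (c*?M + (d*VM m k + t)) k = d"
      using digit_block[OF m2 dt, of c] by (simp add: add.assoc)
    moreover have "hp m y (Suc k) (c*?M + (d*VM m k + t)) = ?h"
      by (rule hp_cong, rule digit_add_high[OF m2 _ lt]) auto
    ultimately show ?thesis by (simp add: psi_k[OF m2 z])
  qed
  have "(\<Sum>t<?M. psi m (c*?M + t) y) = (\<Sum>d<m k. \<Sum>t<VM m k. psi m (c*?M + (d*VM m k + t)) y)"
    using sum_blocks[of "\<lambda>t. psi m (c*?M + t) y" "m k" "VM m k"] by (simp add: VM_Suc mult.commute)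
  also have "\<dots> = (\<Sum>d<m k. \<Sum>t<VM m k. ?w ^ d * ?h)"
    by (intro sum.cong refl) (simp add: tm)
  also have "\<dots> = of_nat (VM m k) * ?h * (\<Sum>d<m k. ?w ^ d)"
    by (simp add: sum_distrib_left sum_distrib_right mult_ac)
  also have "(\<Sum>d<m k. ?w ^ d) = 0"
    by (rule root_sum[OF rk_pow rk_ne1[of y k m, OF yk]]) (use m2[of k] in simp)
  finally show ?thesis by simp
qed

lemma Dir_bound:
  assumes m2: "\<And>k. m k \<ge> 2" and z: "\<And>j. j < k \<Longrightarrow> y j = 0" and yk: "0 < y k" "y k < m k"
  shows "norm (Dir m n y) \<le> real (VM m (Suc k))"
proof -
  have "norm (\<Sum>i<n. psi m i y) \<le> real (VM m (Suc k)) * 1"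
    by (rule block_bound) (use VM_pos[OF m2] psi_block[of m k y, OF m2 z yk] norm_psi in auto)
  then show ?thesis by (simp add: Dir_def)
qed

lemma Dir_zero:
  assumes m2: "\<And>k. m k \<ge> 2" and z: "\<And>j. j < k \<Longrightarrow> y j = 0" and yk: "0 < y k" "y k < m k"
    and d: "VM m (Suc k) dvd X"
  shows "Dir m X y = 0"
proof -
  obtain c where "X = VM m (Suc k) * c" using d by (auto elim!: dvdE)
  then have X: "X = c * VM m (Suc k)" by (simp add: mult.commute)
  show ?thesis unfolding Dir_def X
    by (rule block_zero) (rule psi_block[of m k y, OF m2 z yk])
qed

lemma Dir_add: "Dir m (X + a) y = Dir m X y + (\<Sum>t<a. psi m (X + t) y)"
  unfolding Dir_def by (rule sum_lt_add)

lemma Dir_block: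
  assumes m2: "\<And>k. m k \<ge> 2" and kl: "k < l" and z: "\<And>j. j < k \<Longrightarrow> y j = 0"
    and z2: "\<And>j. k < j \<Longrightarrow> j < l \<Longrightarrow> y j = 0"
    and yk: "0 < y k" "y k < m k" and yl: "0 < y l" "y l < m l"
  shows "(\<Sum>t<VM m (Suc l). Dir m (c*VM m (Suc l) + t) y) = 0"
proof -
  let ?w = "rk m k y"
  let ?z = "rk m l y"
  let ?L = "VM m (Suc l)"
  let ?h = "hp m y (Suc l) (c*?L)"
  let ?G = "\<lambda>a. (\<Sum>t<a. ?w ^ digit m t k)"
  have tm: "Dir m (c*?L + (d*VM m l + a)) y = ?z ^ d * (?h * ?G a)" if da: "d < m l" "a < VM m l" for d a
  proof -
    let ?X = "c*?L + d*VM m l"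
    have dX: "VM m l dvd ?X" using VM_dvd[of l "Suc l" m] by auto
    have dX2: "VM m (Suc k) dvd ?X" using dX VM_dvd[of "Suc k" l m] kl dvd_trans by auto
    have D0: "Dir m ?X y = 0" by (rule Dir_zero[of m k y, OF m2 z yk dX2])
    have ps: "psi m (?X + t) y = ?z ^ d * (?h * ?w ^ digit m t k)" if t: "t < a" for t
    proof -
      have tl: "t < VM m l" using t da by simp
      have "digit m (?X + t) k = digit m t k" by (rule digit_add_low[OF m2 dX kl])
      moreover have "digit m (?X + t) l = d" by (rule digit_block[OF m2 da(1) tl])
      moreover have "hp m y (Suc l) (?X + t) = ?h"
      proof -
        have lt: "d*VM m l + t < ?L" using lt_block[OF da(1) tl] by (simp add: VM_Suc mult.commute)
        have "hp m y (Suc l) (c*?L + (d*VM m l + t)) = ?h"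
          by (rule hp_cong, rule digit_add_high[OF m2 _ lt]) auto
        then show ?thesis by (simp add: add.assoc)
      qed
      ultimately show ?thesis by (simp add: psi_kl[OF m2 kl z z2] mult_ac)
    qed
    have "Dir m (c*?L + (d*VM m l + a)) y = Dir m (?X + a) y" by (simp add: add.assoc)
    also have "\<dots> = Dir m ?X y + (\<Sum>t<a. psi m (?X + t) y)" by (rule Dir_add)
    also have "\<dots> = (\<Sum>t<a. psi m (?X + t) y)" using D0 by simp
    also have "\<dots> = (\<Sum>t<a. ?z ^ d * (?h * ?w ^ digit m t k))"
      by (rule sum.cong) (simp_all add: ps)
    also have "\<dots> = ?z ^ d * (?h * ?G a)" by (simp add: sum_distrib_left)
    finally show ?thesis .
  qed
  have "(\<Sum>t<?L. Dir m (c*?L + t) y) = (\<Sum>d<m l. \<Sum>a<VM m l. Dir m (c*?L + (d*VM m l + a)) y)"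
    using sum_blocks[of "\<lambda>t. Dir m (c*?L + t) y" "m l" "VM m l"] by (simp add: VM_Suc mult.commute)
  also have "\<dots> = (\<Sum>d<m l. \<Sum>a<VM m l. ?z ^ d * (?h * ?G a))"
    by (intro sum.cong refl) (simp add: tm)
  also have "\<dots> = (\<Sum>d<m l. ?z ^ d * (\<Sum>a<VM m l. ?h * ?G a))"
    by (simp only: sum_distrib_left)
  also have "\<dots> = (\<Sum>d<m l. ?z ^ d) * (\<Sum>a<VM m l. ?h * ?G a)"
    by (simp only: sum_distrib_right)
  also have "(\<Sum>d<m l. ?z ^ d) = 0"
    by (rule root_sum[OF rk_pow rk_ne1[of y l m, OF yl]]) (use m2[of l] in simp)
  finally show ?thesis by simp
qed

lemma Dirsum_bound:
  assumes m2: "\<And>k. m k \<ge> 2" and kl: "k < l" and z: "\<And>j. j < k \<Longrightarrow> y j = 0"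
    and z2: "\<And>j. k < j \<Longrightarrow> j < l \<Longrightarrow> y j = 0"
    and yk: "0 < y k" "y k < m k" and yl: "0 < y l" "y l < m l"
  shows "norm (\<Sum>i<n. Dir m i y) \<le> real (VM m (Suc l)) * real (VM m (Suc k))"
  by (rule block_bound) (use VM_pos[OF m2] Dir_block[of m k l y, OF m2 kl z z2 yk yl] Dir_bound[of m k y, OF m2 z yk] in auto)

lemma abel_ineq:
  fixes v :: "nat \<Rightarrow> real" and a :: "nat \<Rightarrow> complex"
  assumes dec: "\<And>t. v (Suc t) \<le> v t" and nn: "\<And>t. v t \<ge> 0"
    and A: "\<And>j. j \<le> n \<Longrightarrow> norm (\<Sum>t<j. a t) \<le> K"
  shows "norm (\<Sum>t<n. of_real (v t) * a t) \<le> v 0 * K"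
proof -
  define S where "S j = (\<Sum>t<j. a t)" for j
  have id: "(\<Sum>t<N. of_real (v t) * a t) = (\<Sum>t<N. of_real (v t - v (Suc t)) * S (Suc t)) + of_real (v N) * S N" for N
    by (induction N) (simp_all add: S_def algebra_simps)
  have "norm (\<Sum>t<n. of_real (v t) * a t) \<le> norm (\<Sum>t<n. of_real (v t - v (Suc t)) * S (Suc t)) + norm (of_real (v n) * S n)"
    unfolding id by (rule norm_triangle_ineq)
  also have "norm (\<Sum>t<n. of_real (v t - v (Suc t)) * S (Suc t)) \<le> (\<Sum>t<n. (v t - v (Suc t)) * K)"
  proof -
    have "norm (\<Sum>t<n. of_real (v t - v (Suc t)) * S (Suc t)) \<le> (\<Sum>t<n. norm (of_real (v t - v (Suc t)) * S (Suc t)))"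
      by (rule norm_sum)
    also have "\<dots> \<le> (\<Sum>t<n. (v t - v (Suc t)) * K)"
    proof (rule sum_mono)
      fix t assume "t \<in> {..<n}"
      then have "norm (S (Suc t)) \<le> K" using A[of "Suc t"] by (simp add: S_def)
      moreover have "0 \<le> v t - v (Suc t)" using dec[of t] by simp
      ultimately show "norm (of_real (v t - v (Suc t)) * S (Suc t)) \<le> (v t - v (Suc t)) * K"
        by (simp add: norm_mult abs_of_nonneg mult_left_mono del: of_real_diff)
    qed
    finally show ?thesis .
  qed
  also have "norm (of_real (v n) * S n) \<le> v n * K"
    using A[of n] nn[of n] by (simp add: S_def norm_mult mult_left_mono)
  also have "(\<Sum>t<n. (v t - v (Suc t)) * K) + v n * K = v 0 * K"
  proof -
    have "(\<Sum>t<n. (v t - v (Suc t)) * K) = (\<Sum>t<n. (v t - v (Suc t))) * K"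
      by (simp only: sum_distrib_right)
    also have "(\<Sum>t<n. (v t - v (Suc t))) = v 0 - v n" by (rule sum_lessThan_telescope')
    finally show ?thesis by (simp add: algebra_simps)
  qed
  finally show ?thesis by simp
qed



lemma Qs_ge: assumes "\<And>k. q k \<ge> 0" "i < n" shows "q i \<le> Qs q n"
  unfolding Qs_def by (rule member_le_sum) (use assms in auto)

lemma Qs_pos: assumes "\<And>k. q k \<ge> 0" "q 0 > 0" "n \<ge> 1" shows "Qs q n > 0"
  using Qs_ge[of q 0 n] assms by simp

lemma sum_rev: "(\<Sum>j=1..(n::nat). f (n-j)) = (\<Sum>i<n. f i)"
  by (rule sum.reindex_bij_witness[of _ "\<lambda>i. n - i" "\<lambda>j. n - j"]) auto

lemma sum_shift1: "(\<Sum>j=1..(n::nat). g j) = (\<Sum>t<n. g (Suc t))"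
  by (rule sum.reindex_bij_witness[of _ "\<lambda>t. Suc t" "\<lambda>j. j - 1"]) auto

lemma Fn_bound_ii:
  assumes m2: "\<And>k. m k \<ge> 2" and z: "\<And>j. j < k \<Longrightarrow> y j = 0" and yk: "0 < y k" "y k < m k"
    and qn: "\<And>k. q k \<ge> 0" and q0: "q 0 > 0" and n1: "n \<ge> 1"
  shows "norm (Fn m q n y) \<le> real (VM m (Suc k))"
proof -
  have Q: "Qs q n > 0" by (rule Qs_pos[of q n, OF qn q0 n1])
  have "norm (\<Sum>j=1..n. of_real (q (n - j)) * Dir m j y) \<le> (\<Sum>j=1..n. norm (of_real (q (n - j)) * Dir m j y))"
    by (rule norm_sum)
  also have "\<dots> \<le> (\<Sum>j=1..n. q (n - j) * real (VM m (Suc k)))"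
  proof (rule sum_mono)
    fix j show "norm (of_real (q (n - j)) * Dir m j y) \<le> q (n - j) * real (VM m (Suc k))"
      using Dir_bound[of m k y, OF m2 z yk, of j] qn[of "n-j"]
      by (simp add: norm_mult mult_left_mono)
  qed
  also have "\<dots> = (\<Sum>j=1..n. q (n - j)) * real (VM m (Suc k))"
    by (simp only: sum_distrib_right)
  also have "(\<Sum>j=1..n. q (n - j)) = Qs q n" unfolding Qs_def by (rule sum_rev)
  finally have S: "norm (\<Sum>j=1..n. of_real (q (n - j)) * Dir m j y) \<le> Qs q n * real (VM m (Suc k))" .
  have "norm (Fn m q n y) = norm (\<Sum>j=1..n. of_real (q (n - j)) * Dir m j y) / Qs q n"
    unfolding Fn_def using Q by (simp add: norm_mult norm_divide)
  also have "\<dots> \<le> Qs q n * real (VM m (Suc k)) / Qs q n"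
    by (rule divide_right_mono[OF S]) (use Q in simp)
  also have "\<dots> = real (VM m (Suc k))" using Q by simp
  finally show ?thesis .
qed

lemma Fn_bound_i:
  assumes m2: "\<And>k. m k \<ge> 2" and kl: "k < l" and z: "\<And>j. j < k \<Longrightarrow> y j = 0"
    and z2: "\<And>j. k < j \<Longrightarrow> j < l \<Longrightarrow> y j = 0"
    and yk: "0 < y k" "y k < m k" and yl: "0 < y l" "y l < m l"
    and qn: "\<And>k. q k \<ge> 0" and q0: "q 0 > 0" and qm: "mono q" and n1: "n \<ge> 1"
  shows "norm (Fn m q n y) \<le> q (n - 1) / Qs q n * (real (VM m (Suc l)) * real (VM m (Suc k)))"
proof -
  let ?K = "real (VM m (Suc l)) * real (VM m (Suc k))"
  have Q: "Qs q n > 0" by (rule Qs_pos[of q n, OF qn q0 n1])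
  have eq: "(\<Sum>j=1..n. of_real (q (n - j)) * Dir m j y) = (\<Sum>t<n. of_real (q (n - 1 - t)) * Dir m (Suc t) y)"
    using sum_shift1[of "\<lambda>j. complex_of_real (q (n - j)) * Dir m j y" n] by simp
  have "norm (\<Sum>t<n. of_real (q (n - 1 - t)) * Dir m (Suc t) y) \<le> q (n - 1 - 0) * ?K"
  proof (rule abel_ineq)
    fix t show "q (n - 1 - Suc t) \<le> q (n - 1 - t)" by (rule monoD[OF qm]) simp
  next
    fix t show "0 \<le> q (n - 1 - t)" by (rule qn)
  next
    fix j
    have "(\<Sum>t<j. Dir m (Suc t) y) = (\<Sum>i<Suc j. Dir m i y)"
    proof -
      have D0: "Dir m 0 y = 0" by (simp add: Dir_def)
      show ?thesis using sum.lessThan_Suc_shift[of "\<lambda>i. Dir m i y" j] by (simp add: D0)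
    qed
    then show "norm (\<Sum>t<j. Dir m (Suc t) y) \<le> ?K"
      using Dirsum_bound[of m k l y, OF m2 kl z z2 yk yl, of "Suc j"] by simp
  qed
  then have S: "norm (\<Sum>j=1..n. of_real (q (n - j)) * Dir m j y) \<le> q (n - 1) * ?K"
    unfolding eq by simp
  have "norm (Fn m q n y) = norm (\<Sum>j=1..n. of_real (q (n - j)) * Dir m j y) / Qs q n"
    unfolding Fn_def using Q by (simp add: norm_mult norm_divide)
  also have "\<dots> \<le> q (n - 1) * ?K / Qs q n"
    by (rule divide_right_mono[OF S]) (use Q in simp)
  finally show ?thesis by simp
qed

lemma Vsub_low:
  assumes "x \<in> Vspace m" "t \<in> IN m N" "j < N"
  shows "Vsub m x t j = x j"
proof -
  have "x j < m j" using assms(1) by (auto simp: Vspace_def PiE_iff)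
  moreover have "t j = 0" using assms(2,3) by (simp add: IN_def)
  ultimately show ?thesis by (simp add: Vsub_def)
qed

lemma Vmu_finite: assumes m2: "\<And>k. m k \<ge> 2" shows "finite_measure (Vmu m)"
  unfolding Vmu_def
proof (rule prob_space.finite_measure, rule prob_space_PiM, rule prob_space_uniform_count_measure)
  fix i
  show "finite {..<m i}" by simp
  have "m i \<noteq> 0" using m2[of i] by auto
  then show "{..<m i} \<noteq> {}" by (metis lessThan_iff empty_iff gr0I)
qed



theorem mainTheorem6:
  fixes m :: "nat \<Rightarrow> nat" and q :: "nat \<Rightarrow> real"
  assumes m_ge2: "\<And>k. m k \<ge> 2"
    and m_bdd: "\<exists>B. \<forall>k. m k \<le> B"
    and q_mono: "mono q"
    and q_nonneg: "\<And>k. q k \<ge> 0"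
    and q0: "q 0 > 0"
    and q_O: "(\<lambda>n. q (n - 1) / Qs q n) \<in> O(\<lambda>n. 1 / real n)"
  shows "\<exists>c>0. \<forall>N n. n \<ge> VM m N \<longrightarrow>
     (\<forall>k l x. k + 2 \<le> N \<longrightarrow> k + 1 \<le> l \<longrightarrow> l + 1 \<le> N \<longrightarrow> x \<in> INkl m N k l \<longrightarrow>
        (LINT t:IN m N|Vmu m. cmod (Fn m q n (Vsub m x t)))
          \<le> c * real (VM m l) * real (VM m k) / (real n * real (VM m N))) \<and>
     (\<forall>k x. k + 1 \<le> N \<longrightarrow> x \<in> INkN m N k \<longrightarrow>
        (LINT t:IN m N|Vmu m. cmod (Fn m q n (Vsub m x t)))
          \<le> c * real (VM m k) / real (VM m N))"
proof -
  obtain B where B: "\<And>k. m k \<le> B" using m_bdd by blast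
  have B2: "B \<ge> 2" using B[of 0] m_ge2[of 0] by simp
  obtain C0 where C0: "C0 > 0" and ev: "eventually (\<lambda>n. norm (q (n - 1) / Qs q n) \<le> C0 * norm (1 / real n)) at_top"
    using q_O by (elim landau_o.bigE) auto
  obtain n0 where n0: "\<And>n. n \<ge> n0 \<Longrightarrow> norm (q (n - 1) / Qs q n) \<le> C0 * norm (1 / real n)"
    using ev by (auto simp: eventually_at_top_linorder)
  define C where "C = max C0 (real n0)"
  have CC0: "C0 \<le> C" and Cpos: "C > 0" using C0 by (auto simp: C_def)
  have ratio: "q (n - 1) / Qs q n \<le> C / real n" if n1: "n \<ge> 1" for n
  proof -
    have Q: "Qs q n > 0" by (rule Qs_pos[of q n, OF q_nonneg q0 n1])
    have qle: "q (n - 1) \<le> Qs q n" by (rule Qs_ge[OF q_nonneg]) (use n1 in simp)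
    have qnn: "q (n - 1) \<ge> 0" by (rule q_nonneg)
    show ?thesis
    proof (cases "n \<ge> n0")
      case True
      have "q (n - 1) / Qs q n \<le> C0 * (1 / real n)"
        using n0[OF True] Q qnn n1 by simp
      also have "\<dots> \<le> C * (1 / real n)" by (rule mult_right_mono[OF CC0]) simp
      finally show ?thesis by simp
    next
      case False
      have "q (n - 1) / Qs q n \<le> 1" using qle Q by simp
      also have "1 \<le> real n0 / real n" using False n1 by simp
      also have "\<dots> \<le> C / real n" by (rule divide_right_mono) (auto simp: C_def)
      finally show ?thesis .
    qed
  qed
  define c where "c = C * real B ^ 2 + real B"
  have cpos: "c > 0"
  proof -
    have "0 \<le> C * real B ^ 2" using Cpos by simp
    moreover have "real B \<ge> 2" using B2 by simp
    ultimately show ?thesis unfolding c_def by linarith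
  qed
  have m1: "1 \<le> m k" for k using m_ge2[of k] by simp
  have INs: "IN m N \<in> sets (Vmu m)" for N by (rule Vmu_IN(1)[OF m1])
  have INm: "measure (Vmu m) (IN m N) = 1 / real (VM m N)" for N by (rule Vmu_IN(2)[OF m1])
  have fin: "finite_measure (Vmu m)" by (rule Vmu_finite[OF m_ge2])
  have VMSuc: "real (VM m (Suc j)) \<le> real B * real (VM m j)" for j
  proof -
    have "VM m (Suc j) \<le> VM m j * B" unfolding VM_Suc by (rule mult_left_mono[OF B]) simp
    then have "real (VM m (Suc j)) \<le> real (VM m j * B)" by (simp only: of_nat_le_iff)
    then show ?thesis by (simp add: mult.commute)
  qed
  have VMp: "real (VM m j) > 0" for j using VM_pos[OF m_ge2] by simp
  show ?thesis
  proof (intro exI[of _ c] conjI cpos allI impI)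
    fix N n k l x
    assume nN: "VM m N \<le> n" and kN: "k + 2 \<le> N" and kl: "k + 1 \<le> l" and lN: "l + 1 \<le> N"
      and x: "x \<in> INkl m N k l"
    have n1: "n \<ge> 1" using nN VM_pos[of m N, OF m_ge2] by simp
    have xV: "x \<in> Vspace m" using x by (simp add: INkl_def)
    let ?P = "C / real n * (real B ^ 2 * (real (VM m l) * real (VM m k)))"
    have pt: "cmod (Fn m q n (Vsub m x t)) \<le> ?P" if t: "t \<in> IN m N" for t
    proof -
      let ?y = "Vsub m x t"
      have low: "\<And>j. j < N \<Longrightarrow> ?y j = x j" by (rule Vsub_low[OF xV t])
      have z: "\<And>j. j < k \<Longrightarrow> ?y j = 0" using x kN low by (auto simp: INkl_def)
      have z2: "\<And>j. k < j \<Longrightarrow> j < l \<Longrightarrow> ?y j = 0" using x lN low by (auto simp: INkl_def)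
      have xk: "x k < m k" "x l < m l" using xV by (auto simp: Vspace_def PiE_iff)
      have yk: "0 < ?y k" "?y k < m k" using x kN low xk by (auto simp: INkl_def)
      have yl: "0 < ?y l" "?y l < m l" using x lN low xk by (auto simp: INkl_def)
      have "cmod (Fn m q n ?y) \<le> q (n - 1) / Qs q n * (real (VM m (Suc l)) * real (VM m (Suc k)))"
        by (rule Fn_bound_i[OF m_ge2 _ z z2 yk yl q_nonneg q0 q_mono n1]) (use kl in simp)
      also have "\<dots> \<le> C / real n * (real B ^ 2 * (real (VM m l) * real (VM m k)))"
      proof (rule mult_mono)
        show "q (n - 1) / Qs q n \<le> C / real n" by (rule ratio[OF n1])
        have "real (VM m (Suc l)) * real (VM m (Suc k)) \<le> (real B * real (VM m l)) * (real B * real (VM m k))"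
          by (rule mult_mono[OF VMSuc VMSuc]) auto
        then show "real (VM m (Suc l)) * real (VM m (Suc k)) \<le> real B ^ 2 * (real (VM m l) * real (VM m k))"
          by (simp add: power2_eq_square mult_ac)
        show "0 \<le> C / real n" using Cpos by simp
        show "0 \<le> real (VM m (Suc l)) * real (VM m (Suc k))" by simp
      qed
      finally show ?thesis .
    qed
    have "(LINT t:IN m N|Vmu m. cmod (Fn m q n (Vsub m x t))) \<le> ?P * measure (Vmu m) (IN m N)"
      by (rule set_integral_le_bound[OF INs fin pt]) (use Cpos in auto)
    also have "\<dots> = (C * real B ^ 2) * (real (VM m l) * real (VM m k)) / (real n * real (VM m N))"
      by (simp add: INm)
    also have "\<dots> \<le> c * (real (VM m l) * real (VM m k)) / (real n * real (VM m N))"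
      by (rule divide_right_mono, rule mult_right_mono) (auto simp: c_def)
    finally show "(LINT t:IN m N|Vmu m. cmod (Fn m q n (Vsub m x t)))
          \<le> c * real (VM m l) * real (VM m k) / (real n * real (VM m N))" by (simp add: mult.assoc)
  next
    fix N n k x
    assume nN: "VM m N \<le> n" and kN: "k + 1 \<le> N" and x: "x \<in> INkN m N k"
    have n1: "n \<ge> 1" using nN VM_pos[of m N, OF m_ge2] by simp
    have xV: "x \<in> Vspace m" using x by (simp add: INkN_def)
    let ?P = "real B * real (VM m k)"
    have pt: "cmod (Fn m q n (Vsub m x t)) \<le> ?P" if t: "t \<in> IN m N" for t
    proof -
      let ?y = "Vsub m x t"
      have low: "\<And>j. j < N \<Longrightarrow> ?y j = x j" by (rule Vsub_low[OF xV t])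
      have z: "\<And>j. j < k \<Longrightarrow> ?y j = 0" using x kN low by (auto simp: INkN_def)
      have xk: "x k < m k" using xV by (auto simp: Vspace_def PiE_iff)
      have yk: "0 < ?y k" "?y k < m k" using x kN low xk by (auto simp: INkN_def)
      have "cmod (Fn m q n ?y) \<le> real (VM m (Suc k))"
        by (rule Fn_bound_ii[of m k "Vsub m x t" q n, OF m_ge2 z yk q_nonneg q0 n1])
      also have "\<dots> \<le> ?P" by (rule VMSuc)
      finally show ?thesis .
    qed
    have "(LINT t:IN m N|Vmu m. cmod (Fn m q n (Vsub m x t))) \<le> ?P * measure (Vmu m) (IN m N)"
      by (rule set_integral_le_bound[OF INs fin pt]) auto
    also have "\<dots> = real B * real (VM m k) / real (VM m N)"
      by (simp add: INm)
    also have "\<dots> \<le> c * real (VM m k) / real (VM m N)"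
      by (rule divide_right_mono, rule mult_right_mono) (use Cpos in \<open>auto simp: c_def\<close>)
    finally show "(LINT t:IN m N|Vmu m. cmod (Fn m q n (Vsub m x t))) \<le> c * real (VM m k) / real (VM m N)" .
  qed
qed


end
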